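(* For every closed subset $\mathtt{S}$ of $\mathbf{N}^{+}\times\mathbf{N}^{-}$, if $\mathtt{S}\setminus\big((\{1\}\times\mathbf{N}^{-})\cup(\mathbf{N}^{+}\times\{-1,0,1\})\big)$ is infinite, then either $\{2\}\times\mathbf{N}^{-}\subseteq\mathtt{S}$ or $\mathbf{N}^{+}\times\{2\}\subseteq\mathtt{S}$.
   Context: $\mathbb{N}=\{0,1,2,\dots\}$, $\mathbf{N}^{+}=\mathbb{N}\setminus\{0\}$, $\mathbf{N}^{-}=\mathbb{N}\cup\{-1\}$. On $\mathbf{N}^{+}\times\mathbf{N}^{-}$, $(m,n)\ll(m',n')$ iff $m\le m'$ and $n\le n'$. For $(m,n)\in\mathbf{N}^{+}\times\mathbf{N}^{-}$, $\pi(m,n)=\{(m',n')\in\mathbf{N}^{+}\times\mathbf{N}^{-}:(m',n')\ll(m,n)\}$. A subset $\mathtt{S}\subseteq\mathbf{N}^{+}\times\mathbf{N}^{-}$ is closed if $(m,n)\in\mathtt{S}$ implies $\pi(m,n)\subseteq\mathtt{S}$. *)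

theory Defs
  imports Main
begin

definition NP :: "int set" where "NP = {m. m \<ge> 1}"
definition NM :: "int set" where "NM = {n. n \<ge> -1}"

definition dom_ll :: "(int \<times> int) \<Rightarrow> (int \<times> int) \<Rightarrow> bool" (infix "\<lless>" 50) where
  "p \<lless> q \<longleftrightarrow> fst p \<le> fst q \<and> snd p \<le> snd q"

definition pi_set :: "int \<times> int \<Rightarrow> (int \<times> int) set" where
  "pi_set p = {q \<in> NP \<times> NM. q \<lless> p}"

definition closed_set :: "(int \<times> int) set \<Rightarrow> bool" where
  "closed_set S \<longleftrightarrow> S \<subseteq> NP \<times> NM \<and> (\<forall>p\<in>S. pi_set p \<subseteq> S)"

end

theory Submission
  imports Defs
begin

theorem lemma3:
  fixes S :: "(int \<times> int) set"
  assumes "closed_set S"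
    and "infinite (S - (({1} \<times> NM) \<union> (NP \<times> {-1, 0, 1})))"
  shows "{2} \<times> NM \<subseteq> S \<or> NP \<times> {2} \<subseteq> S"
proof (rule ccontr)
  assume "\<not> ?thesis"
  then obtain a b where a: "a \<in> NP" "(a,2) \<notin> S" and b: "b \<in> NM" "(2,b) \<notin> S"
    by auto
  have cl: "\<And>p q. p \<in> S \<Longrightarrow> q \<in> NP \<times> NM \<Longrightarrow> q \<lless> p \<Longrightarrow> q \<in> S"
    using assms(1) unfolding closed_set_def pi_set_def by blast
  have sub: "S - (({1} \<times> NM) \<union> (NP \<times> {-1, 0, 1})) \<subseteq> {2..a} \<times> {2..b}"
  proof
    fix p assume p: "p \<in> S - (({1} \<times> NM) \<union> (NP \<times> {-1, 0, 1}))"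
    obtain m n where pe: "p = (m,n)" by (cases p)
    have inS: "(m,n) \<in> S" and dom: "(m,n) \<in> NP \<times> NM" using p pe assms(1) unfolding closed_set_def by auto
    have m2: "m \<ge> 2" and n2: "n \<ge> 2" using p pe dom unfolding NP_def NM_def by auto
    have "m < a"
    proof (rule ccontr)
      assume "\<not> m < a"
      hence "(a,2) \<in> S" using cl[OF inS, of "(a,2)"] a n2 unfolding dom_ll_def NP_def NM_def by auto
      thus False using a by simp
    qed
    moreover have "n < b"
    proof (rule ccontr)
      assume "\<not> n < b"
      hence "(2,b) \<in> S" using cl[OF inS, of "(2,b)"] b m2 unfolding dom_ll_def NP_def NM_def by auto
      thus False using b by simp
    qed
    ultimately show "p \<in> {2..a} \<times> {2..b}" using pe m2 n2 by auto
  qed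
  have "finite ({2..a} \<times> {2..b})" by simp
  thus False using finite_subset[OF sub] assms(2) by simp
qed

end
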